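(* In the setting below, suppose the graph $\mathcal G_{el}$ is connected and for every $i\in\mathcal D$ the gains satisfy $k^C_{1,i}<1$, $k^C_{2,i}<R^C_{ti}$, $k^C_{3,i}>0$. Then the origin of the linear system $\dot{\mathbf x}=\mathbf F^C\mathbf x$, $\mathbf x\in\mathbb{R}^{3N}$, is asymptotically stable.
   Context: Let $N\ge1$, $\mathcal D=\{1,\dots,N\}$, $\mathcal G_{el}$ an undirected graph on $\mathcal D$ with neighbor sets $\mathcal N_i$; for each $i$ let $C_{ti},L^C_{ti},R^C_{ti},R_{Li}>0$, and for each edge $R_{ij}=R_{ji}>0$. Let $e_1=(1,0,0)^T$, $F_i^C=\begin{bmatrix}0&\frac{1}{C_{ti}}&0\\ \frac{k^C_{1,i}-1}{L^C_{ti}}&\frac{k^C_{2,i}-R^C_{ti}}{L^C_{ti}}&\frac{k^C_{3,i}}{L^C_{ti}}\\ 0&-1&0\end{bmatrix}$. $\mathbf F^C\in\mathbb{R}^{3N\times3N}$ has $(i,i)$ block $F_i^C-\Big(\frac{1}{R_{Li}C_{ti}}+\sum_{j\in\mathcal N_i}\frac{1}{R_{ij}C_{ti}}\Big)e_1e_1^T$ and $(i,j)$ block ($j\neq i$) equal to $\frac{1}{R_{ij}C_{ti}}e_1e_1^T$ if $j\in\mathcal N_i$, $0$ otherwise. (This is the closed-loop dynamics of $N$ current-controlled converter units with PI-type state feedback, with exogenous inputs set to zero.) *)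

theory Defs
  imports "HOL-Analysis.Analysis" "HOL-Library.Numeral_Type"
begin

text \<open>Units are indexed by a finite type 'n (so N = CARD('n) >= 1); each unit has three
states indexed by the type 3 (components 0, 1, 2). The full state lives in
real ^ ('n \<times> 3), i.e. R^{3N}.\<close>

definition blockF :: "real \<Rightarrow> real \<Rightarrow> real \<Rightarrow> real \<Rightarrow> real \<Rightarrow> real \<Rightarrow> 3 \<Rightarrow> 3 \<Rightarrow> real" where
  "blockF Ct Lt Rt k1 k2 k3 a b =
     (if a = 0 \<and> b = 1 then 1 / Ct
      else if a = 1 \<and> b = 0 then (k1 - 1) / Lt
      else if a = 1 \<and> b = 1 then (k2 - Rt) / Lt
      else if a = 1 \<and> b = 2 then k3 / Lt
      else if a = 2 \<and> b = 1 then -1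
      else 0)"

text \<open>The closed-loop matrix F^C. E is the (symmetric, irreflexive) edge relation of G_el,
so the neighbour set N_i is {j. E i j}.\<close>
definition FC :: "('n::finite \<Rightarrow> 'n \<Rightarrow> bool) \<Rightarrow> ('n \<Rightarrow> real) \<Rightarrow> ('n \<Rightarrow> real) \<Rightarrow> ('n \<Rightarrow> real)
    \<Rightarrow> ('n \<Rightarrow> real) \<Rightarrow> ('n \<Rightarrow> 'n \<Rightarrow> real)
    \<Rightarrow> ('n \<Rightarrow> real) \<Rightarrow> ('n \<Rightarrow> real) \<Rightarrow> ('n \<Rightarrow> real) \<Rightarrow> real ^ ('n \<times> 3) ^ ('n \<times> 3)" where
  "FC E Ct Lt Rt RL R k1 k2 k3 =
     (\<chi> p q. let i = fst p; a = snd p; j = fst q; b = snd q in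
        if i = j then
          blockF (Ct i) (Lt i) (Rt i) (k1 i) (k2 i) (k3 i) a b
          - (if a = 0 \<and> b = 0
             then 1 / (RL i * Ct i) + (\<Sum>l\<in>{l. E i l}. 1 / (R i l * Ct i))
             else 0)
        else if E i j \<and> a = 0 \<and> b = 0 then 1 / (R i j * Ct i) else 0)"

definition lin_solution :: "real ^ 'm ^ 'm \<Rightarrow> (real \<Rightarrow> real ^ 'm) \<Rightarrow> bool" where
  "lin_solution A x \<longleftrightarrow>
     (\<forall>t\<ge>0. (x has_vector_derivative (A *v x t)) (at t within {0..}))"

definition asymptotically_stable_origin :: "real ^ 'm ^ 'm \<Rightarrow> bool" where
  "asymptotically_stable_origin A \<longleftrightarrow>
     (\<forall>\<epsilon>>0. \<exists>\<delta>>0. \<forall>x. lin_solution A x \<and> norm (x 0) < \<delta> \<longrightarrow> (\<forall>t\<ge>0. norm (x t) < \<epsilon>))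
     \<and> (\<exists>\<delta>>0. \<forall>x. lin_solution A x \<and> norm (x 0) < \<delta> \<longrightarrow> (x \<longlongrightarrow> 0) at_top)"

end

theory Submission
  imports Defs "HOL-Real_Asymp.Real_Asymp"
begin

lemma unit_ineq:
  fixes C L RL a b g :: real
  assumes C: "C > 0" and L: "L > 0" and RL: "RL > 0" and a: "a > 0" and b: "b > 0" and g: "g > 0"
  assumes e_def: "e = min 1 (min (g/(4 * L)) (min (b/(4 * L)) (g/(RL * a + 2 * b))))"
  assumes k_def: "k = min (1/(2 * RL)) (min (b/(2 * a)) (e * g/(2 * a)))"
  assumes M_def: "M = max (C/2) (max (3 * L/(4 * a)) (3 * g/(4 * a)))"
  assumes m_def: "m = min (C/2) (min (L/(4 * a)) (g/(4 * a)))"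
  shows "e > 0" "k > 0" "M > 0" "m > 0"
    "C * v^2/2 + (L * c^2 + g * z^2 - 2 * e * L * c * z)/(2 * a) \<le> M * (v^2+c^2+z^2)"
    "m * (v^2+c^2+z^2) \<le> C * v^2/2 + (L * c^2 + g * z^2 - 2 * e * L * c * z)/(2 * a)"
    "-(v^2/RL) - b * c^2/a + e * (a * v * z + b * c * z - g * z^2 + L * c^2)/a \<le> - k * (v^2+c^2+z^2)"
proof -
  show e0: "e > 0" unfolding e_def using g L b RL a by (auto intro!: divide_pos_pos add_pos_pos)
  show "k > 0" unfolding k_def using e0 g a b RL by auto
  show "M > 0" unfolding M_def using C by auto
  show "m > 0" unfolding m_def using C L g a by auto
  have e1: "e \<le> 1" and e2: "e \<le> g/(4 * L)" and e3: "e \<le> b/(4 * L)" and e4: "e \<le> g/(RL * a+2 * b)"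
    unfolding e_def by auto
  have ee: "e * e \<le> g/(4 * L)" using e1 e2 e0 by (meson dual_order.trans mult_left_le mult_nonneg_nonneg less_imp_le mult_le_one order.refl)
  have ee': "e * e * L \<le> g/4" using ee L by (simp add: field_simps)
  have eL: "e * L \<le> b/4" using e3 L by (simp add: field_simps)
  have pos: "RL * a+2 * b > 0" using RL a b by (simp add: add_pos_pos)
  have eR: "e * (RL * a+2 * b) \<le> g" using e4 pos by (simp add: pos_le_divide_eq)
  have cz1: "2 * e * L * c * z \<le> L * c^2/2 + 2 * e * e * L * z^2"
  proof -
    have "0 \<le> L * (c/2 - e * z)^2/2" using L by simp
    thus ?thesis by (simp add: power2_eq_square algebra_simps)
  qed
  have cz2: "-(2 * e * L * c * z) \<le> L * c^2/2 + 2 * e * e * L * z^2"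
  proof -
    have "0 \<le> L * (c/2 + e * z)^2/2" using L by simp
    thus ?thesis by (simp add: power2_eq_square algebra_simps)
  qed
  have zz: "2 * e * e * L * z^2 \<le> g * z^2/2"
  proof -
    have "(e * e * L) * z^2 \<le> (g/4) * z^2" using ee' by (rule mult_right_mono) simp
    thus ?thesis by simp
  qed
  have "L * c^2 + g * z^2 - 2 * e * L * c * z \<le> 3 * L * c^2/2 + 3 * g * z^2/2" using cz2 zz by linarith
  hence "(L * c^2 + g * z^2 - 2 * e * L * c * z)/(2 * a) \<le> (3 * L * c^2/2 + 3 * g * z^2/2)/(2 * a)"
    using a by (intro divide_right_mono) auto
  also have "(3 * L * c^2/2 + 3 * g * z^2/2)/(2 * a) = (3 * L/(4 * a)) * c^2 + (3 * g/(4 * a)) * z^2"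
    using a by (simp add: field_simps)
  finally have up: "(L * c^2 + g * z^2 - 2 * e * L * c * z)/(2 * a) \<le> (3 * L/(4 * a)) * c^2 + (3 * g/(4 * a)) * z^2" .
  have "L * c^2/2 + g * z^2/2 \<le> L * c^2 + g * z^2 - 2 * e * L * c * z" using cz1 zz by linarith
  hence "(L * c^2/2 + g * z^2/2)/(2 * a) \<le> (L * c^2 + g * z^2 - 2 * e * L * c * z)/(2 * a)"
    using a by (intro divide_right_mono) auto
  moreover have "(L * c^2/2 + g * z^2/2)/(2 * a) = (L/(4 * a)) * c^2 + (g/(4 * a)) * z^2"
    using a by (simp add: field_simps)
  ultimately have lo: "(L/(4 * a)) * c^2 + (g/(4 * a)) * z^2 \<le> (L * c^2 + g * z^2 - 2 * e * L * c * z)/(2 * a)" by simp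
  have M1: "C/2 \<le> M" "3 * L/(4 * a) \<le> M" "3 * g/(4 * a) \<le> M" unfolding M_def by auto
  have "C * v^2/2 + (L * c^2 + g * z^2 - 2 * e * L * c * z)/(2 * a) \<le> (C/2) * v^2 + (3 * L/(4 * a)) * c^2 + (3 * g/(4 * a)) * z^2"
    using up by simp
  also have "\<dots> \<le> M * v^2 + M * c^2 + M * z^2"
    using M1 by (intro add_mono mult_right_mono) auto
  finally show "C * v^2/2 + (L * c^2 + g * z^2 - 2 * e * L * c * z)/(2 * a) \<le> M * (v^2+c^2+z^2)"
    by (simp add: algebra_simps)
  have m1: "m \<le> C/2" "m \<le> L/(4 * a)" "m \<le> g/(4 * a)" unfolding m_def by auto
  have "m * (v^2+c^2+z^2) = m * v^2 + m * c^2 + m * z^2" by (simp add: algebra_simps)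
  also have "\<dots> \<le> (C/2) * v^2 + (L/(4 * a)) * c^2 + (g/(4 * a)) * z^2"
    using m1 by (intro add_mono mult_right_mono) auto
  also have "\<dots> \<le> C * v^2/2 + (L * c^2 + g * z^2 - 2 * e * L * c * z)/(2 * a)" using lo by simp
  finally show "m * (v^2+c^2+z^2) \<le> C * v^2/2 + (L * c^2 + g * z^2 - 2 * e * L * c * z)/(2 * a)" .
  have d1: "e * v * z \<le> v^2/(2 * RL) + e * e * RL * z^2/2"
  proof -
    have "0 \<le> (v - e * RL * z)^2/(2 * RL)" using RL by simp
    also have "(v - e * RL * z)^2/(2 * RL) = v^2/(2 * RL) + e * e * RL * z^2/2 - e * v * z"
      using RL by (simp add: power2_eq_square field_simps)
    finally show ?thesis by simp
  qed
  have d2: "b * e * c * z \<le> b * c^2/4 + b * e * e * z^2"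
  proof -
    have "0 \<le> b * (c/2 - e * z)^2" using b by simp
    thus ?thesis by (simp add: power2_eq_square algebra_simps)
  qed
  have d3: "e * L * c^2 \<le> b * c^2/4"
  proof -
    have "(e * L) * c^2 \<le> (b/4) * c^2" using eL by (rule mult_right_mono) simp
    thus ?thesis by simp
  qed
  have d4: "e * e * (RL * a+2 * b) * z^2 \<le> e * g * z^2" using eR e0
    by (metis mult.assoc mult_left_mono mult_right_mono zero_le_power2 less_imp_le)
  have "e * (a * v * z + b * c * z - g * z^2 + L * c^2)/a = e * v * z + (b * e * c * z - e * g * z^2 + e * L * c^2)/a"
    using a by (simp add: field_simps)
  have d4': "e * e * RL * a * z^2 + 2 * (b * e * e * z^2) \<le> e * g * z^2" using d4 by (simp add: algebra_simps)
  have Q: "-(b * c^2) + b * e * c * z - e * g * z^2 + e * L * c^2 \<le> a * (-(b/(2 * a)) * c^2 - (e * g/(2 * a)) * z^2 - e * e * RL * z^2/2)"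
  proof -
    have "-(b * c^2) + b * e * c * z - e * g * z^2 + e * L * c^2 \<le> -(b * c^2)/2 - (e * g * z^2)/2 - e * e * RL * a * z^2/2"
      using d2 d3 d4' by linarith
    also have "\<dots> = a * (-(b/(2 * a)) * c^2 - (e * g/(2 * a)) * z^2 - e * e * RL * z^2/2)" using a by (simp add: field_simps)
    finally show ?thesis .
  qed
  have Q': "(-(b * c^2) + b * e * c * z - e * g * z^2 + e * L * c^2)/a \<le> -(b/(2 * a)) * c^2 - (e * g/(2 * a)) * z^2 - e * e * RL * z^2/2"
    using Q a by (simp add: pos_divide_le_eq mult.commute)
  have eq: "-(v^2/RL) - b * c^2/a + e * (a * v * z + b * c * z - g * z^2 + L * c^2)/a
     = -(v^2/RL) + e * v * z + (-(b * c^2) + b * e * c * z - e * g * z^2 + e * L * c^2)/a"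
    using a by (simp add: field_simps)
  have vv: "-(v^2/RL) = -(1/(2 * RL)) * v^2 - v^2/(2 * RL)" by (simp add: field_simps)
  have key: "-(v^2/RL) - b * c^2/a + e * (a * v * z + b * c * z - g * z^2 + L * c^2)/a
      \<le> - (1/(2 * RL)) * v^2 - (b/(2 * a)) * c^2 - (e * g/(2 * a)) * z^2"
    unfolding eq using Q' d1 vv by linarith
  have k1: "k \<le> 1/(2 * RL)" "k \<le> b/(2 * a)" "k \<le> e * g/(2 * a)" unfolding k_def by auto
  have "- (1/(2 * RL)) * v^2 - (b/(2 * a)) * c^2 - (e * g/(2 * a)) * z^2 \<le> -k * v^2 - k * c^2 - k * z^2"
    using k1 by (smt (verit) mult_right_mono zero_le_power2)
  with key show "-(v^2/RL) - b * c^2/a + e * (a * v * z + b * c * z - g * z^2 + L * c^2)/a \<le> - k * (v^2+c^2+z^2)"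
    by (simp add: algebra_simps)
qed
lemma UNIV_3: "(UNIV::3 set) = {0,1,2}"
proof -
  have "(3::3) = 0" by simp
  show ?thesis
  proof (intro set_eqI iffI)
    fix x :: 3
    show "x \<in> {0,1,2}" using exhaust_3[of x] \<open>(3::3) = 0\<close> by auto
  qed auto
qed

lemma sum_3: "(\<Sum>b\<in>(UNIV::3 set). f b) = f 0 + f 1 + f 2"
  unfolding UNIV_3 by (simp add: add.assoc)

lemma sum_prod_UNIV: "(\<Sum>p\<in>UNIV. f p) = (\<Sum>i\<in>UNIV. \<Sum>b\<in>UNIV. f (i,b))"
  unfolding sum.cartesian_product by simp

lemma sum_if_const: "(\<Sum>b\<in>A. if P then f b else 0) = (if P then sum f A else 0)"
  by (cases P) simp_all

lemma FC_row1:
  "(FC E Ct Lt Rt RL R k1 k2 k3 *v x) $ (i,1) = ((k1 i - 1) * x$(i,0) + (k2 i - Rt i) * x$(i,1) + k3 i * x$(i,2))/Lt i"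
proof -
  have "(FC E Ct Lt Rt RL R k1 k2 k3 *v x) $ (i,1) = (\<Sum>j\<in>UNIV. \<Sum>b\<in>UNIV. if i = j then blockF (Ct i) (Lt i) (Rt i) (k1 i) (k2 i) (k3 i) 1 b * x$(j,b) else 0)"
    unfolding matrix_vector_mult_def FC_def sum_prod_UNIV by (auto intro!: sum.cong simp: Let_def)
  also have "\<dots> = (\<Sum>b\<in>UNIV. blockF (Ct i) (Lt i) (Rt i) (k1 i) (k2 i) (k3 i) 1 b * x$(i,b))"
    by (simp add: sum_if_const sum.delta sum.delta')
  also have "\<dots> = ((k1 i - 1) * x$(i,0) + (k2 i - Rt i) * x$(i,1) + k3 i * x$(i,2))/Lt i"
    unfolding sum_3 blockF_def by (simp add: add_divide_distrib diff_divide_distrib algebra_simps)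
  finally show ?thesis .
qed

lemma FC_row2:
  "(FC E Ct Lt Rt RL R k1 k2 k3 *v x) $ (i,2) = - x$(i,1)"
proof -
  have "(FC E Ct Lt Rt RL R k1 k2 k3 *v x) $ (i,2) = (\<Sum>j\<in>UNIV. \<Sum>b\<in>UNIV. if i = j then blockF (Ct i) (Lt i) (Rt i) (k1 i) (k2 i) (k3 i) 2 b * x$(j,b) else 0)"
    unfolding matrix_vector_mult_def FC_def sum_prod_UNIV by (auto intro!: sum.cong simp: Let_def)
  also have "\<dots> = (\<Sum>b\<in>UNIV. blockF (Ct i) (Lt i) (Rt i) (k1 i) (k2 i) (k3 i) 2 b * x$(i,b))"
    by (simp add: sum_if_const sum.delta sum.delta')
  also have "\<dots> = - x$(i,1)"
    unfolding sum_3 blockF_def by simp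
  finally show ?thesis .
qed

lemma FC_row0:
  assumes irrefl: "\<And>i. \<not> E i i"
  shows "(FC E Ct Lt Rt RL R k1 k2 k3 *v x) $ (i,0) = x$(i,1)/Ct i
     - (1/(RL i * Ct i) + (\<Sum>l\<in>{l. E i l}. 1/(R i l * Ct i))) * x$(i,0) + (\<Sum>j\<in>{j. E i j}. x$(j,0)/(R i j * Ct i))"
proof -
  let ?D = "1/(RL i * Ct i) + (\<Sum>l\<in>{l. E i l}. 1/(R i l * Ct i))"
  have "(FC E Ct Lt Rt RL R k1 k2 k3 *v x) $ (i,0) = (\<Sum>j\<in>UNIV. \<Sum>b\<in>UNIV.
      (if i = j then (blockF (Ct i) (Lt i) (Rt i) (k1 i) (k2 i) (k3 i) 0 b - (if b = 0 then ?D else 0)) * x$(j,b) else 0)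
      + (if E i j \<and> b = 0 then x$(j,0)/(R i j * Ct i) else 0))"
    unfolding matrix_vector_mult_def FC_def sum_prod_UNIV using irrefl by (auto intro!: sum.cong simp: Let_def)
  also have "\<dots> = (\<Sum>b\<in>UNIV. (blockF (Ct i) (Lt i) (Rt i) (k1 i) (k2 i) (k3 i) 0 b - (if b = 0 then ?D else 0)) * x$(i,b))
      + (\<Sum>j\<in>UNIV. if E i j then x$(j,0)/(R i j * Ct i) else 0)"
    by (simp add: sum.distrib sum_if_const sum.delta sum.delta' sum_3)
  also have "\<dots> = x$(i,1)/Ct i - ?D * x$(i,0) + (\<Sum>j\<in>{j. E i j}. x$(j,0)/(R i j * Ct i))"
    unfolding sum_3 blockF_def by (simp add: sum.If_cases field_simps)
  finally show ?thesis .
qed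

lemma vec_comp_deriv:
  assumes "(y has_vector_derivative y') F"
  shows "((\<lambda>t. y t $ p) has_real_derivative (y' $ p)) F"
proof -
  have "((\<lambda>t. y t $ p) has_derivative (\<lambda>h. (h*\<^sub>R y') $ p)) F"
    using bounded_linear.has_derivative[OF bounded_linear_vec_nth assms[unfolded has_vector_derivative_def]] .
  moreover have "(\<lambda>h. (h*\<^sub>R y') $ p) = (*) (y' $ p)" by (auto simp: fun_eq_iff)
  ultimately show ?thesis unfolding has_field_derivative_def by simp
qed

lemma quad_deriv:
  assumes "(f1 has_real_derivative d1) (at t within S)" "(f2 has_real_derivative d2) (at t within S)"
    "(f3 has_real_derivative d3) (at t within S)" "a \<noteq> 0"
  shows "((\<lambda>t. C * (f1 t)^2/2 + (L * (f2 t)^2 + g * (f3 t)^2 - 2 * e * L * (f2 t) * (f3 t))/(2 * a)) has_real_derivative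
     C * f1 t * d1 + (L * f2 t * d2 + g * f3 t * d3 - e * L * (d2 * f3 t + f2 t * d3))/a) (at t within S)"
  using assms by (auto intro!: derivative_eq_intros simp: field_simps)

lemma norm_sq_vec: "(norm (x::real^'m))^2 = (\<Sum>p\<in>UNIV. (x$p)^2)"
  unfolding norm_vec_def L2_set_def by (simp add: sum_nonneg)

lemma exp_lim: "(K::real) > 0 \<Longrightarrow> ((\<lambda>t. exp (-K * t)) \<longlongrightarrow> 0) at_top"
  by real_asymp

lemma graph_neg:
  fixes v :: "'n::finite \<Rightarrow> real" and E :: "'n \<Rightarrow> 'n \<Rightarrow> bool"
  assumes sym: "\<And>i j. E i j \<Longrightarrow> E j i"
    and R_sym: "\<And>i j. E i j \<Longrightarrow> R i j = R j i"
    and R_pos: "\<And>i j. E i j \<Longrightarrow> R i j > 0"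
  shows "(\<Sum>i\<in>UNIV. v i * (\<Sum>j\<in>{j. E i j}. (v j - v i)/R i j)) \<le> 0"
proof -
  define f where "f i j = (if E i j then v i * (v j - v i)/R i j else 0)" for i j
  have S: "(\<Sum>i\<in>UNIV. v i * (\<Sum>j\<in>{j. E i j}. (v j - v i)/R i j)) = (\<Sum>i\<in>UNIV. \<Sum>j\<in>UNIV. f i j)"
    unfolding f_def by (simp add: sum_distrib_left sum.If_cases)
  have sw: "(\<Sum>i\<in>UNIV. \<Sum>j\<in>UNIV. f i j) = (\<Sum>i\<in>UNIV. \<Sum>j\<in>UNIV. f j i)"
    by (rule sum.swap)
  have "2 * (\<Sum>i\<in>UNIV. \<Sum>j\<in>UNIV. f i j) = (\<Sum>i\<in>UNIV. \<Sum>j\<in>UNIV. f i j + f j i)"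
    using sw by (simp add: sum.distrib)
  also have "\<dots> = (\<Sum>i\<in>UNIV. \<Sum>j\<in>UNIV. if E i j then - ((v i - v j)^2 / R i j) else 0)"
  proof (intro sum.cong refl)
    fix i j
    show "f i j + f j i = (if E i j then - ((v i - v j)^2 / R i j) else 0)"
    proof (cases "E i j")
      case True
      hence "E j i" "R j i = R i j" using sym R_sym by auto
      hence "f i j + f j i = (v i * (v j - v i) + v j * (v i - v j))/R i j"
        unfolding f_def using True by (simp add: add_divide_distrib)
      also have "\<dots> = (- ((v i - v j)^2)) / R i j" by (simp add: power2_eq_square algebra_simps)
      finally show ?thesis using True by simp
    next
      case False
      hence "\<not> E j i" using sym by auto
      thus ?thesis unfolding f_def using False by simp
    qed
  qed
  also have "\<dots> \<le> 0"
    using R_pos by (intro sum_nonpos) (auto intro!: divide_nonneg_pos)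
  finally show ?thesis unfolding S by simp
qed

lemma decay:
  fixes h h' :: "real \<Rightarrow> real"
  assumes d: "\<And>s. s \<ge> 0 \<Longrightarrow> (h has_real_derivative h' s) (at s within {0..})"
    and le: "\<And>s. s \<ge> 0 \<Longrightarrow> h' s \<le> - K * h s"
    and t: "t \<ge> 0"
  shows "h t \<le> exp (- K * t) * h 0"
proof -
  define G where "G = (\<lambda>s. exp (K * s) * h s)"
  define G' where "G' = (\<lambda>s. exp (K * s) * K * h s + exp (K * s) * h' s)"
  have dG: "(G has_real_derivative G' s) (at s within {0..t})" if "0 \<le> s" "s \<le> t" for s
  proof -
    have "(h has_real_derivative h' s) (at s within {0..})" using d that by simp
    hence "(h has_real_derivative h' s) (at s within {0..t})"
      by (rule has_field_derivative_subset) auto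
    thus ?thesis unfolding G_def G'_def
      by (auto intro!: derivative_eq_intros simp: algebra_simps)
  qed
  have G'le: "G' s \<le> 0" if "0 \<le> s" for s
  proof -
    have "G' s = exp (K * s) * (K * h s + h' s)" unfolding G'_def by (simp add: algebra_simps)
    moreover have "K * h s + h' s \<le> 0" using le[OF that] by simp
    ultimately show ?thesis by (simp add: mult_nonneg_nonpos)
  qed
  have "\<exists>x\<in>{0..t}. G t - G 0 = (*) (G' x) (t - 0)"
    using dG t unfolding has_field_derivative_def by (intro mvt_very_simple) auto
  then obtain \<xi> where xi: "\<xi> \<in> {0..t}" and eq: "G t - G 0 = G' \<xi> * t" by auto
  have "G' \<xi> * t \<le> 0" using G'le[of \<xi>] xi t by (simp add: mult_nonpos_nonneg)
  hence "G t \<le> G 0" using eq by simp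
  hence "exp (K * t) * h t \<le> h 0" unfolding G_def by simp
  hence "exp (-K * t) * (exp (K * t) * h t) \<le> exp (-K * t) * h 0" by (simp add: mult_left_mono)
  thus ?thesis by (simp add: mult.assoc[symmetric] exp_add[symmetric])
qed


theorem theorem1:
  fixes E :: "'n::finite \<Rightarrow> 'n \<Rightarrow> bool"
    and Ct Lt Rt RL k1 k2 k3 :: "'n \<Rightarrow> real"
    and R :: "'n \<Rightarrow> 'n \<Rightarrow> real"
  assumes sym: "\<And>i j. E i j \<Longrightarrow> E j i"
    and irrefl: "\<And>i. \<not> E i i"
    and connected: "\<And>i j. E\<^sup>*\<^sup>* i j"
    and Ct_pos: "\<And>i. Ct i > 0" and Lt_pos: "\<And>i. Lt i > 0"
    and Rt_pos: "\<And>i. Rt i > 0" and RL_pos: "\<And>i. RL i > 0"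
    and R_sym: "\<And>i j. E i j \<Longrightarrow> R i j = R j i"
    and R_pos: "\<And>i j. E i j \<Longrightarrow> R i j > 0"
    and k1: "\<And>i. k1 i < 1" and k2: "\<And>i. k2 i < Rt i" and k3: "\<And>i. k3 i > 0"
  shows "asymptotically_stable_origin (FC E Ct Lt Rt RL R k1 k2 k3)"
proof -
  define F where "F = FC E Ct Lt Rt RL R k1 k2 k3"
  define a where "a i = 1 - k1 i" for i
  define b where "b i = Rt i - k2 i" for i
  have a_pos: "a i > 0" for i using k1[of i] unfolding a_def by simp
  have b_pos: "b i > 0" for i using k2[of i] unfolding b_def by simp
  define ee where "ee i = min 1 (min (k3 i/(4 * Lt i)) (min (b i/(4 * Lt i)) (k3 i/(RL i * a i + 2 * b i))))" for i
  define kk where "kk i = min (1/(2 * RL i)) (min (b i/(2 * a i)) (ee i * k3 i/(2 * a i)))" for i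
  define Mi where "Mi i = max (Ct i/2) (max (3 * Lt i/(4 * a i)) (3 * k3 i/(4 * a i)))" for i
  define mi where "mi i = min (Ct i/2) (min (Lt i/(4 * a i)) (k3 i/(4 * a i)))" for i
  note U = unit_ineq[OF Ct_pos Lt_pos RL_pos a_pos b_pos k3 ee_def kk_def Mi_def mi_def]
  define w where "w i v c z = Ct i * v^2/2 + (Lt i * c^2 + k3 i * z^2 - 2 * ee i * Lt i * c * z)/(2 * a i)" for i v c z
  define sq where "sq (x::real^('n\<times>3)) i = (x$(i,0))^2 + (x$(i,1))^2 + (x$(i,2))^2" for x :: "real^('n\<times>3)" and i
  define W where "W x = (\<Sum>i\<in>UNIV. Ct i * (x$(i,0))^2/2 + (Lt i * (x$(i,1))^2 + k3 i * (x$(i,2))^2 - 2 * ee i * Lt i * (x$(i,1)) * (x$(i,2)))/(2 * a i))" for x :: "real^('n\<times>3)"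
  have W_w: "W x = (\<Sum>i\<in>UNIV. w i (x$(i,0)) (x$(i,1)) (x$(i,2)))" for x :: "real^('n\<times>3)" unfolding W_def w_def ..
  define dW where "dW x = (\<Sum>i\<in>UNIV. Ct i * x$(i,0) * (F *v x)$(i,0) + (Lt i * x$(i,1) * (F *v x)$(i,1) + k3 i * x$(i,2) * (F *v x)$(i,2) - ee i * Lt i * ((F *v x)$(i,1) * x$(i,2) + x$(i,1) * (F *v x)$(i,2)))/a i)" for x :: "real^('n\<times>3)"
  define MM where "MM = Max (range Mi)"
  define mm where "mm = Min (range mi)"
  define KK where "KK = Min (range (\<lambda>i. kk i / Mi i))"
  have MM: "Mi i \<le> MM" for i unfolding MM_def by (rule Max_ge) auto
  have mm: "mm \<le> mi i" for i unfolding mm_def by (rule Min_le) auto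
  have KK: "KK \<le> kk i / Mi i" for i unfolding KK_def by (rule Min_le) auto
  have mm_pos: "mm > 0" unfolding mm_def using U(4) by (subst Min_gr_iff) auto
  have MM_pos: "MM > 0" using MM[of undefined] U(3)[of undefined] by linarith
  have KK_pos: "KK > 0" unfolding KK_def using U(2,3) by (subst Min_gr_iff) (auto intro!: divide_pos_pos)
  have norm_sq: "(norm x)^2 = (\<Sum>i\<in>UNIV. sq x i)" for x :: "real^('n\<times>3)"
    unfolding norm_sq_vec sum_prod_UNIV sum_3 sq_def ..
  have sq_nonneg: "sq x i \<ge> 0" for x :: "real^('n\<times>3)" and i unfolding sq_def by simp
  have W_up: "W x \<le> MM * (norm x)^2" for x :: "real^('n\<times>3)"
  proof -
    have "W x \<le> (\<Sum>i\<in>UNIV. MM * sq x i)"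
      unfolding W_w
    proof (rule sum_mono)
      fix i
      have "w i (x$(i,0)) (x$(i,1)) (x$(i,2)) \<le> Mi i * sq x i"
        unfolding w_def sq_def by (rule U(5))
      also have "\<dots> \<le> MM * sq x i" using MM[of i] sq_nonneg[of x i] by (rule mult_right_mono)
      finally show "w i (x$(i,0)) (x$(i,1)) (x$(i,2)) \<le> MM * sq x i" .
    qed
    thus ?thesis unfolding norm_sq by (simp add: sum_distrib_left)
  qed
  have w_lo: "mm * sq x i \<le> w i (x$(i,0)) (x$(i,1)) (x$(i,2))" for x :: "real^('n\<times>3)" and i
  proof -
    have "mm * sq x i \<le> mi i * sq x i" using mm[of i] sq_nonneg[of x i] by (rule mult_right_mono)
    also have "\<dots> \<le> w i (x$(i,0)) (x$(i,1)) (x$(i,2))"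
      unfolding w_def sq_def by (rule U(6))
    finally show ?thesis .
  qed
  have W_lo: "mm * (norm x)^2 \<le> W x" for x :: "real^('n\<times>3)"
    unfolding W_w norm_sq sum_distrib_left by (rule sum_mono) (rule w_lo)
  have w_nonneg: "0 \<le> w i (x$(i,0)) (x$(i,1)) (x$(i,2))" for x :: "real^('n\<times>3)" and i
    using w_lo[of x i] mm_pos sq_nonneg[of x i] by (smt (verit) mult_nonneg_nonneg)
  have W_nonneg: "0 \<le> W x" for x :: "real^('n\<times>3)" unfolding W_w by (rule sum_nonneg) (rule w_nonneg)
  have dW_le: "dW x \<le> - KK * W x" for x :: "real^('n\<times>3)"
  proof -
    define v where "v i = x$(i,0)" for i
    define c where "c i = x$(i,1)" for i
    define z where "z i = x$(i,2)" for i
    define u where "u i = (\<Sum>j\<in>{j. E i j}. (v j - v i)/R i j)" for i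
    define Dl where "Dl i = -((v i)^2/RL i) - b i * (c i)^2/a i + ee i * (a i * v i * z i + b i * c i * z i - k3 i * (z i)^2 + Lt i * (c i)^2)/a i" for i
    have CV: "Ct i * (F *v x)$(i,0) = c i - v i/RL i + u i" for i
    proof -
      have "Ct i * (F *v x)$(i,0) = Ct i * (x$(i,1)/Ct i
           - (1/(RL i * Ct i) + (\<Sum>l\<in>{l. E i l}. 1/(R i l * Ct i))) * x$(i,0) + (\<Sum>j\<in>{j. E i j}. x$(j,0)/(R i j * Ct i)))"
        unfolding F_def FC_row0[OF irrefl] ..
      also have "\<dots> = c i - v i/RL i - v i * (\<Sum>l\<in>{l. E i l}. 1/R i l) + (\<Sum>j\<in>{j. E i j}. v j/R i j)"
      proof -
        have s1: "(\<Sum>l\<in>{l. E i l}. 1/(R i l * Ct i)) = (\<Sum>l\<in>{l. E i l}. 1/R i l)/Ct i"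
          by (simp add: sum_divide_distrib divide_divide_eq_left)
        have s2: "(\<Sum>j\<in>{j. E i j}. x$(j,0)/(R i j * Ct i)) = (\<Sum>j\<in>{j. E i j}. v j/R i j)/Ct i"
          unfolding v_def by (simp add: sum_divide_distrib divide_divide_eq_left)
        show ?thesis unfolding s1 s2 using Ct_pos[of i] unfolding c_def v_def
          by (simp add: field_simps)
      qed
      also have "\<dots> = c i - v i/RL i + u i"
        unfolding u_def by (simp add: diff_divide_distrib sum_subtractf sum_distrib_left)
      finally show ?thesis .
    qed
    have LC: "Lt i * (F *v x)$(i,1) = - a i * v i - b i * c i + k3 i * z i" for i
      unfolding F_def FC_row1 using Lt_pos[of i] unfolding a_def b_def v_def c_def z_def
      by (simp add: field_simps)
    have ZV: "(F *v x)$(i,2) = - c i" for i unfolding F_def FC_row2 c_def ..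
    have trm: "Ct i * x$(i,0) * (F *v x)$(i,0) + (Lt i * x$(i,1) * (F *v x)$(i,1) + k3 i * x$(i,2) * (F *v x)$(i,2) - ee i * Lt i * ((F *v x)$(i,1) * x$(i,2) + x$(i,1) * (F *v x)$(i,2)))/a i
        = Dl i + v i * u i" for i
    proof -
      have "Ct i * x$(i,0) * (F *v x)$(i,0) + (Lt i * x$(i,1) * (F *v x)$(i,1) + k3 i * x$(i,2) * (F *v x)$(i,2) - ee i * Lt i * ((F *v x)$(i,1) * x$(i,2) + x$(i,1) * (F *v x)$(i,2)))/a i
        = v i * (Ct i * (F *v x)$(i,0)) + (c i * (Lt i * (F *v x)$(i,1)) + k3 i * z i * (F *v x)$(i,2) - ee i * ((Lt i * (F *v x)$(i,1)) * z i + Lt i * c i * (F *v x)$(i,2)))/a i"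
        unfolding v_def c_def z_def by (simp add: algebra_simps)
      also have "\<dots> = v i * (c i - v i/RL i + u i) + (c i * (- a i * v i - b i * c i + k3 i * z i) + k3 i * z i * (- c i) - ee i * ((- a i * v i - b i * c i + k3 i * z i) * z i + Lt i * c i * (- c i)))/a i"
        unfolding CV LC ZV ..
      also have "\<dots> = Dl i + v i * u i"
        unfolding Dl_def using a_pos[of i] by (simp add: field_simps power2_eq_square)
      finally show ?thesis .
    qed
    have "dW x = (\<Sum>i\<in>UNIV. Dl i) + (\<Sum>i\<in>UNIV. v i * u i)"
      unfolding dW_def trm sum.distrib ..
    also have "\<dots> \<le> (\<Sum>i\<in>UNIV. Dl i)"
      using graph_neg[of E R v, OF sym R_sym R_pos] unfolding u_def by simp
    also have "\<dots> \<le> (\<Sum>i\<in>UNIV. - KK * w i (v i) (c i) (z i))"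
    proof (rule sum_mono)
      fix i
      have s1: "Dl i \<le> - kk i * sq x i"
        unfolding Dl_def sq_def v_def c_def z_def by (rule U(7))
      have wM: "w i (v i) (c i) (z i) \<le> Mi i * sq x i"
        unfolding w_def sq_def v_def c_def z_def by (rule U(5))
      have kM: "kk i / Mi i * w i (v i) (c i) (z i) \<le> kk i * sq x i"
      proof -
        have "kk i / Mi i * w i (v i) (c i) (z i) \<le> kk i / Mi i * (Mi i * sq x i)"
          using wM U(2,3)[of i] by (intro mult_left_mono) auto
        also have "\<dots> = kk i * sq x i" using U(3)[of i] by simp
        finally show ?thesis .
      qed
      have "KK * w i (v i) (c i) (z i) \<le> kk i / Mi i * w i (v i) (c i) (z i)"
        using KK[of i] w_nonneg[of i x] unfolding v_def c_def z_def by (rule mult_right_mono)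
      thus "Dl i \<le> - KK * w i (v i) (c i) (z i)" using s1 kM by linarith
    qed
    also have "\<dots> = - KK * W x" unfolding W_w v_def c_def z_def sum_distrib_left by simp
    finally show ?thesis .
  qed
  have decayW: "W (y t) \<le> exp (- KK * t) * W (y 0)" if sol: "lin_solution F y" and t: "t \<ge> 0" for y t
  proof (rule decay[where h = "\<lambda>t. W (y t)" and h' = "\<lambda>t. dW (y t)" and K = KK, OF _ _ t])
    fix s :: real assume s: "s \<ge> 0"
    have yd: "(y has_vector_derivative (F *v y s)) (at s within {0..})"
      using sol s unfolding lin_solution_def by simp
    note cd = vec_comp_deriv[OF yd]
    show "((\<lambda>t. W (y t)) has_real_derivative dW (y s)) (at s within {0..})"
      unfolding W_def dW_def
      using a_pos by (intro DERIV_sum quad_deriv cd) (auto simp: less_le)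
    show "dW (y s) \<le> - KK * W (y s)" by (rule dW_le)
  qed
  have bound: "mm * (norm (y t))^2 \<le> MM * (norm (y 0))^2" if "lin_solution F y" "t \<ge> 0" for y t
  proof -
    have "mm * (norm (y t))^2 \<le> W (y t)" by (rule W_lo)
    also have "\<dots> \<le> exp (- KK * t) * W (y 0)" using decayW that .
    also have "\<dots> \<le> 1 * W (y 0)"
      using that KK_pos W_nonneg by (intro mult_right_mono) auto
    also have "\<dots> \<le> MM * (norm (y 0))^2" using W_up by simp
    finally show ?thesis .
  qed
  have bound2: "(norm (y t))^2 \<le> exp (- KK * t) * (MM / mm * (norm (y 0))^2)" if "lin_solution F y" "t \<ge> 0" for y t
  proof -
    have "mm * (norm (y t))^2 \<le> W (y t)" by (rule W_lo)
    also have "\<dots> \<le> exp (- KK * t) * W (y 0)" using decayW that .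
    also have "\<dots> \<le> exp (- KK * t) * (MM * (norm (y 0))^2)"
      using W_up by (intro mult_left_mono) auto
    finally have "mm * (norm (y t))^2 \<le> exp (- KK * t) * (MM * (norm (y 0))^2)" .
    thus ?thesis using mm_pos by (simp add: field_simps)
  qed
  show ?thesis
    unfolding asymptotically_stable_origin_def F_def[symmetric]
  proof (intro conjI allI impI)
    fix \<epsilon> :: real assume eps: "\<epsilon> > 0"
    define \<delta> where "\<delta> = \<epsilon> * sqrt (mm / MM)"
    have d_pos: "\<delta> > 0" unfolding \<delta>_def using eps mm_pos MM_pos by simp
    have d2: "MM * \<delta>^2 = mm * \<epsilon>^2"
      unfolding \<delta>_def using mm_pos MM_pos by (simp add: power_mult_distrib)
    show "\<exists>\<delta>>0. \<forall>x. lin_solution F x \<and> norm (x 0) < \<delta> \<longrightarrow> (\<forall>t\<ge>0. norm (x t) < \<epsilon>)"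
    proof (intro exI[of _ \<delta>] conjI d_pos allI impI)
      fix y t assume H: "lin_solution F y \<and> norm (y 0) < \<delta>" and t: "(t::real) \<ge> 0"
      have "(norm (y 0))^2 < \<delta>^2" using H by (simp add: power_strict_mono)
      hence "MM * (norm (y 0))^2 < MM * \<delta>^2" using MM_pos by simp
      hence "mm * (norm (y t))^2 < mm * \<epsilon>^2" using bound[of y t] H t d2 by linarith
      hence "(norm (y t))^2 < \<epsilon>^2" using mm_pos by simp
      thus "norm (y t) < \<epsilon>" by (rule power2_less_imp_less) (use eps in simp)
    qed
  next
    show "\<exists>\<delta>>0. \<forall>x. lin_solution F x \<and> norm (x 0) < \<delta> \<longrightarrow> (x \<longlongrightarrow> 0) at_top"
    proof (intro exI[of _ 1] conjI allI impI)
      fix y assume H: "lin_solution F y \<and> norm (y 0) < 1"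
      define C where "C = MM / mm * (norm (y 0))^2"
      have "((\<lambda>t. sqrt (exp (- KK * t) * C)) \<longlongrightarrow> sqrt (0 * C)) at_top"
        by (intro tendsto_intros exp_lim KK_pos)
      hence lim: "((\<lambda>t. sqrt (exp (- KK * t) * C)) \<longlongrightarrow> 0) at_top" by simp
      have ev: "eventually (\<lambda>t. norm (y t) \<le> sqrt (exp (- KK * t) * C)) at_top"
        using eventually_ge_at_top[of "0::real"]
      proof eventually_elim
        case (elim t)
        show ?case unfolding C_def using bound2[of y t] H elim by (intro real_le_rsqrt) auto
      qed
      show "(y \<longlongrightarrow> 0) at_top" by (rule Lim_null_comparison[OF ev lim])
    qed simp
  qed
qed

end
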